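(* For each $k\ge 3$, let $\mathcal S(\eta,k)$ be the $k$-uniform hyperstar consisting of $\eta$ edges pairwise meeting only in a common center vertex $1$. Let $y^{(\eta)}$ be the principal eigenvector of $\mathcal S(\eta,k)$ and $x^{(\eta)}$ the principal eigenvector of its clique-shadow (the windmill graph of $\eta$ copies of $K_k$ sharing vertex $1$). Then $(y^{(\eta)}_1)^k=1/k$ for every $\eta$, and $(x^{(\eta)}_1)^2\to 1/2$ as $\eta\to\infty$. Consequently $\Delta_k\ge \tfrac12-\tfrac1k$, where $\Delta_k=\sup_H\max_v|y_v^k-x_v^2|$ over all connected $k$-uniform hypergraphs $H$ (with $y,x$ the principal eigenvectors of $H$ and $\partial^*H$).
   Context: For a connected $k$-uniform hypergraph $H=([n],E)$, writing $x^e=\prod_{v\in e}x_v$, its principal eigenvector is the unique strictly positive $y$ with $\|y\|_k=1$ and $\rho\, y_i^{k-1}=\sum_{e\ni i}y^{e\setminus\{i\}}$ for all $i$, where $\rho=\max_{\|z\|_k^k=1}k\sum_{e\in E}z^e$. The clique-shadow $\partial^*H$ is the multigraph on $[n]$ in which $\{u,v\}$ has multiplicity $\mu(uv)=|\{e\in E:u,v\in e\}|$; its principal eigenvector is the positive Perron eigenvector of its adjacency matrix (entries $\mu(uv)$), normalized to unit $2$-norm. *)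

theory Defs
  imports Complex_Main
begin

definition kuniform :: "nat \<Rightarrow> nat \<Rightarrow> nat set set \<Rightarrow> bool" where
  "kuniform n k E \<longleftrightarrow> finite E \<and> (\<forall>e\<in>E. e \<subseteq> {1..n} \<and> card e = k)"

definition hconnected :: "nat \<Rightarrow> nat set set \<Rightarrow> bool" where
  "hconnected n E \<longleftrightarrow> n \<ge> 1 \<and>
     (\<forall>u\<in>{1..n}. \<forall>v\<in>{1..n}. (u, v) \<in> {(a, b). \<exists>e\<in>E. a \<in> e \<and> b \<in> e}\<^sup>*)"

definition hrho :: "nat \<Rightarrow> nat \<Rightarrow> nat set set \<Rightarrow> real" where
  "hrho n k E = Sup {real k * (\<Sum>e\<in>E. \<Prod>v\<in>e. z v) | z :: nat \<Rightarrow> real.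
                      (\<Sum>i\<in>{1..n}. \<bar>z i\<bar> ^ k) = 1}"

definition hpev :: "nat \<Rightarrow> nat \<Rightarrow> nat set set \<Rightarrow> nat \<Rightarrow> real" where
  "hpev n k E = (THE y. (\<forall>i\<in>{1..n}. y i > 0) \<and> (\<forall>i. i \<notin> {1..n} \<longrightarrow> y i = 0)
      \<and> (\<Sum>i\<in>{1..n}. y i ^ k) = 1
      \<and> (\<forall>i\<in>{1..n}. hrho n k E * y i ^ (k - 1) = (\<Sum>e\<in>{e\<in>E. i \<in> e}. \<Prod>v\<in>e - {i}. y v)))"

text \<open>multiplicity of pair {u,v} in the clique-shadow (no loops)\<close>
definition mu :: "nat set set \<Rightarrow> nat \<Rightarrow> nat \<Rightarrow> real" where
  "mu E u v = (if u = v then 0 else real (card {e\<in>E. u \<in> e \<and> v \<in> e}))"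

definition shadow_lambda :: "nat \<Rightarrow> nat set set \<Rightarrow> real" where
  "shadow_lambda n E = Sup {(\<Sum>i\<in>{1..n}. \<Sum>j\<in>{1..n}. mu E i j * x i * x j) | x :: nat \<Rightarrow> real.
                             (\<Sum>i\<in>{1..n}. x i ^ 2) = 1}"

definition spev :: "nat \<Rightarrow> nat set set \<Rightarrow> nat \<Rightarrow> real" where
  "spev n E = (THE x. (\<forall>i\<in>{1..n}. x i > 0) \<and> (\<forall>i. i \<notin> {1..n} \<longrightarrow> x i = 0)
      \<and> (\<Sum>i\<in>{1..n}. x i ^ 2) = 1
      \<and> (\<forall>i\<in>{1..n}. (\<Sum>j\<in>{1..n}. mu E i j * x j) = shadow_lambda n E * x i))"

definition star_n :: "nat \<Rightarrow> nat \<Rightarrow> nat" where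
  "star_n eta k = 1 + eta * (k - 1)"

definition star_edges :: "nat \<Rightarrow> nat \<Rightarrow> nat set set" where
  "star_edges eta k = (\<lambda>j. insert 1 {2 + (j - 1) * (k - 1) .. 1 + j * (k - 1)}) ` {1..eta}"

definition Delta :: "nat \<Rightarrow> real" where
  "Delta k = Sup ((\<lambda>(n, E). Max ((\<lambda>v. \<bar>hpev n k E v ^ k - spev n E v ^ 2\<bar>) ` {1..n}))
                   ` {(n, E). kuniform n k E \<and> hconnected n E})"

end

theory Submission
  imports Defs "HOL-Analysis.Analysis"
begin


locale wf =
  fixes V :: "nat set" and E :: "'e set" and vs :: "'e \<Rightarrow> nat set" and w :: "'e \<Rightarrow> real" and k :: nat
  assumes finV: "finite V" and finE: "finite E" and vsV: "\<And>e. e\<in>E \<Longrightarrow> vs e \<subseteq> V"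
    and cardk: "\<And>e. e\<in>E \<Longrightarrow> card (vs e) = k" and wpos: "\<And>e. e\<in>E \<Longrightarrow> w e \<ge> 0" and k2: "k \<ge> 2"
begin

definition F where "F z = (\<Sum>e\<in>E. w e * (\<Prod>v\<in>vs e. z v))"
definition G where "G i z = (\<Sum>e\<in>{e\<in>E. i \<in> vs e}. w e * (\<Prod>v\<in>vs e - {i}. z v))"
definition N :: "(nat \<Rightarrow> real) \<Rightarrow> real" where "N z = (\<Sum>i\<in>V. \<bar>z i\<bar> ^ k)"
definition rho where "rho = Sup {real k * F z | z. N z = 1}"
definition eig where "eig lam y \<longleftrightarrow> (\<forall>i\<in>V. y i > 0) \<and> (\<forall>i. i\<notin>V \<longrightarrow> y i = 0) \<and> (\<Sum>i\<in>V. y i ^ k) = 1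
   \<and> (\<forall>i\<in>V. lam * y i ^ (k-1) = G i y)"
definition conn where "conn \<longleftrightarrow> (\<forall>u\<in>V. \<forall>v\<in>V. (u,v) \<in> {(a,b). \<exists>e\<in>E. w e > 0 \<and> a \<in> vs e \<and> b \<in> vs e}\<^sup>*)"

lemma finvs: "e \<in> E \<Longrightarrow> finite (vs e)"
  using vsV finV finite_subset by blast

lemma euler: "(\<Sum>i\<in>V. z i * G i z) = real k * F z"
proof -
  have "(\<Sum>i\<in>V. z i * G i z) = (\<Sum>i\<in>V. \<Sum>e\<in>{e. e\<in>E \<and> i \<in> vs e}. w e * (\<Prod>v\<in>vs e. z v))"
    unfolding G_def sum_distrib_left
  proof (intro sum.cong refl)
    fix i e assume "e \<in> {e. e\<in>E \<and> i \<in> vs e}"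
    then have "(\<Prod>v\<in>vs e. z v) = z i * (\<Prod>v\<in>vs e - {i}. z v)"
      using finvs by (auto intro: prod.remove)
    then show "z i * (w e * (\<Prod>v\<in>vs e - {i}. z v)) = w e * (\<Prod>v\<in>vs e. z v)" by simp
  qed
  also have "\<dots> = (\<Sum>e\<in>E. \<Sum>i\<in>{i. i\<in>V \<and> i \<in> vs e}. w e * (\<Prod>v\<in>vs e. z v))"
    by (rule sum.swap_restrict[OF finV finE])
  also have "\<dots> = (\<Sum>e\<in>E. real k * (w e * (\<Prod>v\<in>vs e. z v)))"
  proof (intro sum.cong refl)
    fix e assume e: "e \<in> E"
    have "{i. i\<in>V \<and> i \<in> vs e} = vs e" using vsV[OF e] by auto
    then show "(\<Sum>i\<in>{i. i\<in>V \<and> i \<in> vs e}. w e * (\<Prod>v\<in>vs e. z v)) = real k * (w e * (\<Prod>v\<in>vs e. z v))"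
      using cardk[OF e] by simp
  qed
  also have "\<dots> = real k * F z" unfolding F_def sum_distrib_left ..
  finally show ?thesis .
qed

lemma amgm:
  fixes r :: "nat \<Rightarrow> real"
  assumes e: "e \<in> E" and r: "\<And>v. r v \<ge> 0"
  shows "(\<Prod>v\<in>vs e. r v) \<le> (\<Sum>v\<in>vs e. r v ^ k) / real k"
proof -
  have ne: "vs e \<noteq> {}" using cardk[OF e] k2 by auto
  have "(\<Prod>v\<in>vs e. r v ^ k) powr (1 / card (vs e)) \<le> (\<Sum>v\<in>vs e. r v ^ k / card (vs e))"
    by (rule arith_geom_mean[OF finvs[OF e] ne]) (simp add: r)
  moreover have "(\<Prod>v\<in>vs e. r v ^ k) = (\<Prod>v\<in>vs e. r v) ^ k" by (simp add: prod_power_distrib)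
  moreover have "((\<Prod>v\<in>vs e. r v) ^ k) powr (1 / real k) = (\<Prod>v\<in>vs e. r v)"
  proof -
    have p: "(\<Prod>v\<in>vs e. r v) \<ge> 0" by (simp add: prod_nonneg r)
    have "((\<Prod>v\<in>vs e. r v) ^ k) powr (1 / real k) = ((\<Prod>v\<in>vs e. r v) powr real k) powr (1 / real k)"
      using p k2 by (simp add: powr_realpow')
    also have "\<dots> = (\<Prod>v\<in>vs e. r v)" using p k2 by (simp add: powr_powr)
    finally show ?thesis .
  qed
  ultimately show ?thesis using cardk[OF e] by (simp add: sum_divide_distrib)
qed


lemma swap: "(\<Sum>e\<in>E. \<Sum>v\<in>vs e. h e v) = (\<Sum>v\<in>V. \<Sum>e\<in>{e\<in>E. v \<in> vs e}. h e v)"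
proof -
  have "(\<Sum>e\<in>E. \<Sum>v\<in>vs e. h e v) = (\<Sum>e\<in>E. \<Sum>v\<in>{v. v\<in>V \<and> v \<in> vs e}. h e v)"
    by (intro sum.cong refl) (use vsV in auto)
  also have "\<dots> = (\<Sum>v\<in>V. \<Sum>e\<in>{e. e\<in>E \<and> v \<in> vs e}. h e v)"
    by (rule sum.swap_restrict[OF finE finV])
  finally show ?thesis by simp
qed

lemma Fabs: "F z \<le> F (\<lambda>v. \<bar>z v\<bar>)"
  unfolding F_def
proof (intro sum_mono)
  fix e assume e: "e \<in> E"
  have "w e * (\<Prod>v\<in>vs e. z v) \<le> \<bar>w e * (\<Prod>v\<in>vs e. z v)\<bar>" by simp
  also have "\<dots> = w e * (\<Prod>v\<in>vs e. \<bar>z v\<bar>)" using wpos[OF e] by (simp add: abs_mult abs_prod)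
  finally show "w e * (\<Prod>v\<in>vs e. z v) \<le> w e * (\<Prod>v\<in>vs e. \<bar>z v\<bar>)" .
qed

lemma upper:
  assumes y: "eig lam y"
  shows "real k * F z \<le> lam * N z"
proof -
  have ypos: "\<And>v. v \<in> V \<Longrightarrow> y v > 0" using y unfolding eig_def by auto
  define r where "r v = \<bar>z v\<bar> / y v" for v
  have rnn: "r v \<ge> 0" for v unfolding r_def
    by (cases "v \<in> V") (use y ypos in \<open>auto simp: eig_def intro!: divide_nonneg_pos\<close>)
  have zr: "\<bar>z v\<bar> = y v * r v" if "v \<in> V" for v using ypos[OF that] unfolding r_def by simp
  have "real k * F z \<le> real k * F (\<lambda>v. \<bar>z v\<bar>)" using Fabs[of z] by (intro mult_left_mono) auto
  also have "\<dots> \<le> (\<Sum>e\<in>E. \<Sum>v\<in>vs e. w e * (\<Prod>u\<in>vs e. y u) * r v ^ k)"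
    unfolding F_def sum_distrib_left
  proof (intro sum_mono)
    fix e assume e: "e \<in> E"
    have h0: "(\<Prod>u\<in>vs e. \<bar>z u\<bar>) = (\<Prod>u\<in>vs e. y u) * (\<Prod>u\<in>vs e. r u)"
      using vsV[OF e] zr by (simp add: prod.distrib[symmetric] subset_iff)
    have h1: "(\<Prod>u\<in>vs e. r u) \<le> (\<Sum>u\<in>vs e. r u ^ k) / real k" by (rule amgm[OF e rnn])
    have h2: "0 \<le> w e * (\<Prod>u\<in>vs e. y u)" using wpos[OF e] vsV[OF e] ypos
      by (intro mult_nonneg_nonneg prod_nonneg) (auto intro: less_imp_le)
    have "(w e * (\<Prod>u\<in>vs e. y u)) * (\<Prod>u\<in>vs e. r u) \<le> (w e * (\<Prod>u\<in>vs e. y u)) * ((\<Sum>u\<in>vs e. r u ^ k) / real k)"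
      by (rule mult_left_mono[OF h1 h2])
    then have "real k * ((w e * (\<Prod>u\<in>vs e. y u)) * (\<Prod>u\<in>vs e. r u)) \<le> real k * ((w e * (\<Prod>u\<in>vs e. y u)) * ((\<Sum>u\<in>vs e. r u ^ k) / real k))"
      by (rule mult_left_mono) simp_all
    then have "real k * (w e * (\<Prod>u\<in>vs e. \<bar>z u\<bar>)) \<le> real k * (w e * (\<Prod>u\<in>vs e. y u) * ((\<Sum>u\<in>vs e. r u ^ k) / real k))"
      using h0 by (simp add: mult.assoc)
    also have "\<dots> = (\<Sum>v\<in>vs e. w e * (\<Prod>u\<in>vs e. y u) * r v ^ k)" using k2 by (simp add: sum_distrib_left[symmetric] mult.assoc)
    finally show "real k * (w e * (\<Prod>u\<in>vs e. \<bar>z u\<bar>)) \<le> (\<Sum>v\<in>vs e. w e * (\<Prod>u\<in>vs e. y u) * r v ^ k)" .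
  qed
  also have "\<dots> = (\<Sum>v\<in>V. \<Sum>e\<in>{e\<in>E. v \<in> vs e}. w e * (\<Prod>u\<in>vs e. y u) * r v ^ k)" by (rule swap)
  also have "\<dots> = (\<Sum>v\<in>V. r v ^ k * y v * G v y)"
    unfolding G_def sum_distrib_left
  proof (intro sum.cong refl)
    fix v e assume v: "v \<in> V" and e: "e \<in> {e\<in>E. v \<in> vs e}"
    then have "(\<Prod>u\<in>vs e. y u) = y v * (\<Prod>u\<in>vs e - {v}. y u)" using finvs by (auto intro: prod.remove)
    then show "w e * (\<Prod>u\<in>vs e. y u) * r v ^ k = r v ^ k * y v * (w e * (\<Prod>u\<in>vs e - {v}. y u))" by simp
  qed
  also have "\<dots> = (\<Sum>v\<in>V. lam * (y v * r v) ^ k)"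
  proof (intro sum.cong refl)
    fix v assume v: "v \<in> V"
    have "G v y = lam * y v ^ (k-1)" using y v unfolding eig_def by auto
    moreover have "y v * y v ^ (k-1) = y v ^ k" using k2 by (metis Suc_diff_le le_trans one_le_numeral power_Suc diff_Suc_1)
    ultimately show "r v ^ k * y v * G v y = lam * (y v * r v) ^ k" by (simp add: power_mult_distrib algebra_simps)
  qed
  also have "\<dots> = lam * N z" unfolding N_def sum_distrib_left using zr by simp
  finally show ?thesis .
qed


lemma eig_N: "eig lam y \<Longrightarrow> N y = 1"
  unfolding eig_def N_def by (auto intro!: sum.cong simp: less_imp_le)

lemma eig_F: assumes "eig lam y" shows "real k * F y = lam"
proof -
  have "real k * F y = (\<Sum>i\<in>V. y i * G i y)" by (simp add: euler)
  also have "\<dots> = (\<Sum>i\<in>V. lam * y i ^ k)"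
  proof (intro sum.cong refl)
    fix i assume i: "i \<in> V"
    have "G i y = lam * y i ^ (k-1)" using assms i unfolding eig_def by auto
    moreover have "y i * y i ^ (k-1) = y i ^ k" using k2
      by (metis Suc_diff_le le_trans one_le_numeral power_Suc diff_Suc_1)
    ultimately show "y i * G i y = lam * y i ^ k" by (simp add: algebra_simps)
  qed
  also have "\<dots> = lam" using assms unfolding eig_def by (simp add: sum_distrib_left[symmetric])
  finally show ?thesis .
qed

lemma rho_eq: assumes "eig lam y" shows "rho = lam"
  unfolding rho_def
proof (rule cSup_eq_maximum)
  show "lam \<in> {real k * F z |z. N z = 1}" using eig_F[OF assms] eig_N[OF assms] by auto
  show "x \<le> lam" if xin: "x \<in> {real k * F z |z. N z = 1}" for x
  proof -
    obtain z where "x = real k * F z" "N z = 1" using xin by auto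
    then show ?thesis using upper[OF assms, of z] by simp
  qed
qed

lemma unique:
  assumes c: conn and y: "eig lam y" and y': "eig lam y'"
  shows "y' = y"
proof -
  have ypos: "\<And>v. v \<in> V \<Longrightarrow> y v > 0" using y unfolding eig_def by auto
  have y'pos: "\<And>v. v \<in> V \<Longrightarrow> y' v > 0" using y' unfolding eig_def by auto
  have Vne: "V \<noteq> {}" using y unfolding eig_def by auto
  define t where "t = Max ((\<lambda>i. y' i / y i) ` V)"
  have "t \<in> (\<lambda>i. y' i / y i) ` V"
    unfolding t_def using finV Vne by (intro Max_in) auto
  then obtain i0 where i0: "i0 \<in> V" "t = y' i0 / y i0" by auto
  have tpos: "t > 0" using i0 ypos y'pos by simp
  have le: "y' i \<le> t * y i" if "i \<in> V" for i
  proof -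
    have "y' i / y i \<le> t" unfolding t_def using finV that by (intro Max_ge) auto
    then show ?thesis using ypos[OF that] by (simp add: divide_le_eq mult.commute)
  qed
  define M where "M = {i\<in>V. y' i = t * y i}"
  have i0M: "i0 \<in> M"
  proof -
    have "y i0 > 0" using ypos i0(1) by auto
    then have "t * y i0 = y' i0" unfolding i0(2) by simp
    then show ?thesis unfolding M_def using i0(1) by simp
  qed
  have closed: "v \<in> M" if iM: "i \<in> M" and e: "e \<in> E" and we: "w e > 0" and ie: "i \<in> vs e" and ve: "v \<in> vs e" for i e v
  proof (rule ccontr)
    assume vM: "v \<notin> M"
    have vV: "v \<in> V" using vsV[OF e] ve by auto
    have iV: "i \<in> V" using iM unfolding M_def by auto
    have lt: "y' v < t * y v" using vM le[OF vV] vV unfolding M_def by auto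
    have vi: "v \<noteq> i" using vM iM by auto
    have "G i y' < (\<Sum>e'\<in>{e'\<in>E. i \<in> vs e'}. w e' * (\<Prod>u\<in>vs e' - {i}. t * y u))"
      unfolding G_def
    proof (rule sum_strict_mono_ex1)
      show "finite {e' \<in> E. i \<in> vs e'}" using finE by simp
      show "\<forall>x\<in>{e' \<in> E. i \<in> vs e'}. w x * (\<Prod>v\<in>vs x - {i}. y' v) \<le> w x * (\<Prod>u\<in>vs x - {i}. t * y u)"
      proof
        fix x assume x: "x \<in> {e' \<in> E. i \<in> vs e'}"
        have "(\<Prod>v\<in>vs x - {i}. y' v) \<le> (\<Prod>u\<in>vs x - {i}. t * y u)"
        proof (intro prod_mono conjI)
          fix u assume u: "u \<in> vs x - {i}"
          then have uV: "u \<in> V" using x vsV by auto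
          then show "0 \<le> y' u" using y'pos by (simp add: less_imp_le)
          show "y' u \<le> t * y u" using le uV by simp
        qed
        then show "w x * (\<Prod>v\<in>vs x - {i}. y' v) \<le> w x * (\<Prod>u\<in>vs x - {i}. t * y u)"
          using x wpos by (intro mult_left_mono) auto
      qed
      have "(\<Prod>v\<in>vs e - {i}. y' v) < (\<Prod>u\<in>vs e - {i}. t * y u)"
      proof (rule prod_mono_strict[of v])
        show "v \<in> vs e - {i}" using ve vi by auto
        show "y' v < t * y v" by (rule lt)
        show "finite (vs e - {i})" using finvs[OF e] by simp
        show "\<And>u. u \<in> vs e - {i} \<Longrightarrow> 0 \<le> y' u \<and> y' u \<le> t * y u"
          using vsV[OF e] le y'pos by (auto intro: less_imp_le)
        show "\<And>u. u \<in> vs e - {i} \<Longrightarrow> 0 < t * y u"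
          using vsV[OF e] ypos tpos by auto
      qed
      then show "\<exists>a\<in>{e' \<in> E. i \<in> vs e'}. w a * (\<Prod>v\<in>vs a - {i}. y' v) < w a * (\<Prod>u\<in>vs a - {i}. t * y u)"
        using e ie we by (intro bexI[of _ e]) auto
    qed
    also have "\<dots> = t ^ (k-1) * G i y"
      unfolding G_def sum_distrib_left
    proof (intro sum.cong refl)
      fix x assume x: "x \<in> {e' \<in> E. i \<in> vs e'}"
      have "card (vs x - {i}) = k - 1" using x cardk finvs by auto
      then show "w x * (\<Prod>u\<in>vs x - {i}. t * y u) = t ^ (k-1) * (w x * (\<Prod>u\<in>vs x - {i}. y u))"
        by (simp add: prod.distrib)
    qed
    also have "\<dots> = lam * (t * y i) ^ (k-1)" using y iV unfolding eig_def by (simp add: power_mult_distrib)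
    also have "\<dots> = G i y'" using y' iV iM unfolding eig_def M_def by auto
    finally show False by simp
  qed
  have all: "b \<in> M" if "(a, b) \<in> {(a,b). \<exists>e\<in>E. w e > 0 \<and> a \<in> vs e \<and> b \<in> vs e}\<^sup>*" "a \<in> M" for a b
    using that
  proof (induction rule: rtrancl_induct)
    case base then show ?case .
  next
    case (step b c) then show ?case using closed by blast
  qed
  have VM: "\<And>u. u \<in> V \<Longrightarrow> y' u = t * y u"
    using all i0M c i0(1) unfolding conn_def M_def by blast
  have "1 = (\<Sum>i\<in>V. y' i ^ k)" using y' unfolding eig_def by simp
  also have "\<dots> = (\<Sum>i\<in>V. t ^ k * y i ^ k)" using VM by (simp add: power_mult_distrib)
  also have "\<dots> = t ^ k" using y unfolding eig_def by (simp add: sum_distrib_left[symmetric])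
  finally have "t ^ k = 1 ^ k" by simp
  then have t1: "t = 1" using tpos k2 by (subst (asm) power_eq_iff_eq_base) auto
  show ?thesis
  proof
    fix u show "y' u = y u"
      using VM t1 y y' unfolding eig_def by (cases "u \<in> V") auto
  qed
qed


lemma contF: "continuous_on UNIV F"
  unfolding F_def by (intro continuous_intros continuous_on_product_coordinates)

lemma contN: "continuous_on UNIV N"
  unfolding N_def by (intro continuous_on_sum continuous_on_power continuous_on_rabs continuous_on_product_coordinates)

lemma F_scale: "F (\<lambda>v. c * z v) = c ^ k * F z"
  unfolding F_def sum_distrib_left
  by (intro sum.cong refl) (simp add: prod.distrib cardk)

lemma N_scale: "N (\<lambda>v. c * z v) = \<bar>c\<bar> ^ k * N z"
  unfolding N_def by (simp add: sum_distrib_left abs_mult power_mult_distrib)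

lemma F_nonneg: "(\<And>v. v \<in> V \<Longrightarrow> z v \<ge> 0) \<Longrightarrow> F z \<ge> 0"
  unfolding F_def using vsV wpos by (intro sum_nonneg mult_nonneg_nonneg prod_nonneg) (auto simp: subset_iff)

definition K where "K = (PiE UNIV (\<lambda>i. if i \<in> V then {0..1::real} else {0})) \<inter> {z. N z = 1}"

lemma compactK: "compact K"
proof -
  have "compactin (product_topology (\<lambda>i. euclidean) UNIV) (PiE UNIV (\<lambda>i. if i \<in> V then {0..1::real} else {0}))"
    by (subst compactin_PiE) auto
  then have "compact (PiE UNIV (\<lambda>i. if i \<in> V then {0..1::real} else {0}))"
    by (simp add: euclidean_product_topology)
  moreover have "closed {z. N z = 1}"
    by (intro closed_Collect_eq contN continuous_on_const)
  ultimately show ?thesis unfolding K_def by (rule compact_Int_closed)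
qed


lemma K_iff: "z \<in> K \<longleftrightarrow> (\<forall>i\<in>V. 0 \<le> z i \<and> z i \<le> 1) \<and> (\<forall>i. i \<notin> V \<longrightarrow> z i = 0) \<and> N z = 1"
  unfolding K_def PiE_iff by (auto split: if_splits)

lemma N_zero: assumes "N z = 0" shows "F z = 0"
proof -
  have z0: "z i = 0" if "i \<in> V" for i
  proof -
    have "\<bar>z i\<bar> ^ k \<le> N z" unfolding N_def using finV that by (intro member_le_sum) auto
    then show ?thesis using assms k2 by (auto simp add: power_le_zero_eq)
  qed
  show ?thesis unfolding F_def
  proof (intro sum.neutral ballI)
    fix e assume e: "e \<in> E"
    have "vs e \<noteq> {}" using cardk[OF e] k2 by auto
    then obtain v where "v \<in> vs e" by auto
    then have "(\<Prod>v\<in>vs e. z v) = 0" using z0 vsV[OF e] finvs[OF e] by (intro prod_zero) auto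
    then show "w e * (\<Prod>v\<in>vs e. z v) = 0" by simp
  qed
qed

lemma N_nonneg: "N z \<ge> 0" unfolding N_def by (simp add: sum_nonneg)

lemma maximizer:
  assumes Vne: "V \<noteq> {}"
  obtains z0 where "z0 \<in> K" "\<And>z. real k * F z \<le> real k * F z0 * N z" "rho = real k * F z0"
proof -
  obtain v where v: "v \<in> V" using Vne by auto
  have "(\<Sum>i\<in>V. \<bar>(if i = v then 1 else 0::real)\<bar> ^ k) = (\<Sum>i\<in>V. if i = v then 1 else 0)"
    by (intro sum.cong) (use k2 in auto)
  then have "(\<lambda>i. if i = v then 1 else 0) \<in> K" unfolding K_iff N_def using v finV k2
    by auto
  then have Kne: "K \<noteq> {}" by auto
  obtain z0 where z0: "z0 \<in> K" "\<And>z. z \<in> K \<Longrightarrow> F z \<le> F z0"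
    using continuous_attains_sup[OF compactK Kne continuous_on_subset[OF contF]] by auto
  have one: "F z \<le> F z0" if Nz: "N z = 1" for z
  proof -
    define z' where "z' i = (if i \<in> V then \<bar>z i\<bar> else 0)" for i
    have "F (\<lambda>v. \<bar>z v\<bar>) = F z'" unfolding F_def z'_def
      by (intro sum.cong refl arg_cong2[where f="(*)"] prod.cong) (use vsV in auto)
    moreover have "z' \<in> K"
      unfolding K_iff
    proof (intro conjI ballI allI impI)
      show "N z' = 1" using Nz unfolding N_def z'_def by simp
      fix i assume i: "i \<in> V"
      show "0 \<le> z' i" using i by (simp add: z'_def)
      have "\<bar>z i\<bar> ^ k \<le> N z" unfolding N_def using finV i by (intro member_le_sum) auto
      then have "\<bar>z i\<bar> ^ k \<le> 1 ^ k" using Nz by simp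
      then have "\<bar>z i\<bar> \<le> 1" using k2 power_le_one_iff[of "\<bar>z i\<bar>" k] by simp
      then show "z' i \<le> 1" using i by (simp add: z'_def)
    next
      fix i :: nat assume "i \<notin> V" then show "z' i = 0" by (simp add: z'_def)
    qed
    ultimately show ?thesis using Fabs[of z] z0(2)[of z'] by simp
  qed
  have hom: "real k * F z \<le> real k * F z0 * N z" for z
  proof (cases "N z = 0")
    case True
    then show ?thesis using N_zero by simp
  next
    case False
    then have Np: "N z > 0" using N_nonneg[of z] by simp
    define c where "c = root k (1 / N z)"
    have ck: "c ^ k = 1 / N z" unfolding c_def using Np k2 by (intro real_root_pow_pos2) auto
    have c0: "c \<ge> 0" unfolding c_def using Np by (simp add: real_root_ge_zero)
    have "N (\<lambda>v. c * z v) = 1" using N_scale ck c0 Np by simp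
    then have "F (\<lambda>v. c * z v) \<le> F z0" by (rule one)
    then have "F z / N z \<le> F z0" using F_scale ck by simp
    then have "F z \<le> F z0 * N z" using Np by (simp add: divide_le_eq)
    then show ?thesis by (simp add: mult.assoc mult_left_mono)
  qed
  have "rho = real k * F z0"
    unfolding rho_def
  proof (rule cSup_eq_maximum)
    show "real k * F z0 \<in> {real k * F z |z. N z = 1}" using z0(1) unfolding K_iff by auto
    show "x \<le> real k * F z0" if xin: "x \<in> {real k * F z |z. N z = 1}" for x
    proof -
      obtain z where "x = real k * F z" "N z = 1" using xin by auto
      then show ?thesis using hom[of z] by simp
    qed
  qed
  then show thesis using that z0(1) hom by blast
qed


lemma Fupd: "F (z(i := a)) = F z + (a - z i) * G i z"
proof -
  have "F (z(i := a)) - F z = (\<Sum>e\<in>E. if i \<in> vs e then w e * ((a - z i) * (\<Prod>v\<in>vs e - {i}. z v)) else 0)"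
    unfolding F_def sum_subtractf[symmetric]
  proof (intro sum.cong refl)
    fix e assume e: "e \<in> E"
    show "w e * (\<Prod>v\<in>vs e. (z(i := a)) v) - w e * (\<Prod>v\<in>vs e. z v) =
          (if i \<in> vs e then w e * ((a - z i) * (\<Prod>v\<in>vs e - {i}. z v)) else 0)"
    proof (cases "i \<in> vs e")
      case True
      have "(\<Prod>v\<in>vs e. (z(i := a)) v) = a * (\<Prod>v\<in>vs e - {i}. (z(i := a)) v)"
        using True finvs[OF e] prod.remove[of "vs e" i "z(i:=a)"] by simp
      also have "(\<Prod>v\<in>vs e - {i}. (z(i := a)) v) = (\<Prod>v\<in>vs e - {i}. z v)" by (intro prod.cong) auto
      finally have 1: "(\<Prod>v\<in>vs e. (z(i := a)) v) = a * (\<Prod>v\<in>vs e - {i}. z v)" .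
      have 2: "(\<Prod>v\<in>vs e. z v) = z i * (\<Prod>v\<in>vs e - {i}. z v)"
        using True finvs[OF e] by (intro prod.remove) auto
      show ?thesis using True 1 2 by (simp add: algebra_simps)
    next
      case False
      then have "(\<Prod>v\<in>vs e. (z(i := a)) v) = (\<Prod>v\<in>vs e. z v)" by (intro prod.cong) auto
      then show ?thesis using False by simp
    qed
  qed
  also have "\<dots> = (\<Sum>e\<in>{e\<in>E. i \<in> vs e}. w e * ((a - z i) * (\<Prod>v\<in>vs e - {i}. z v)))"
    by (rule sum.inter_filter[OF finE, symmetric])
  also have "\<dots> = (a - z i) * G i z" unfolding G_def sum_distrib_left by (simp add: algebra_simps)
  finally show ?thesis by simp
qed

lemma Nupd: "i \<in> V \<Longrightarrow> N (z(i := a)) = (\<Sum>j\<in>V - {i}. \<bar>z j\<bar> ^ k) + \<bar>a\<bar> ^ k"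
  unfolding N_def using finV by (subst sum.remove[of V i]) (auto intro!: sum.cong)

lemma eigeq:
  assumes z0K: "z0 \<in> K" and hom: "\<And>z. real k * F z \<le> rho * N z" and r: "rho = real k * F z0"
    and i: "i \<in> V" and pos: "z0 i > 0"
  shows "rho * z0 i ^ (k-1) = G i z0"
proof -
  define S where "S = (\<Sum>j\<in>V - {i}. \<bar>z0 j\<bar> ^ k)"
  define \<psi> where "\<psi> s = rho * (S + (z0 i + s) ^ k) - real k * (F z0 + s * G i z0)" for s
  have D: "DERIV \<psi> 0 :> rho * (real k * z0 i ^ (k-1)) - real k * G i z0"
    unfolding \<psi>_def by (auto intro!: derivative_eq_intros)
  have N1: "N z0 = 1" using z0K unfolding K_iff by auto
  have Nz0: "N z0 = S + z0 i ^ k" unfolding S_def N_def using finV i pos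
    by (subst sum.remove[of V i]) auto
  have "\<forall>s. \<bar>0 - s\<bar> < z0 i \<longrightarrow> \<psi> 0 \<le> \<psi> s"
  proof (intro allI impI)
    fix s assume "\<bar>0 - s\<bar> < z0 i"
    then have sp: "z0 i + s > 0" by auto
    have "\<psi> 0 = 0" unfolding \<psi>_def using N1 Nz0 r by simp
    moreover have "\<psi> s = rho * N (z0(i := z0 i + s)) - real k * F (z0(i := z0 i + s))"
      unfolding \<psi>_def Nupd[OF i] Fupd S_def using sp by simp
    ultimately show "\<psi> 0 \<le> \<psi> s" using hom[of "z0(i := z0 i + s)"] by simp
  qed
  from DERIV_local_min[OF D pos this] have "real k * (rho * z0 i ^ (k-1) - G i z0) = 0"
    by (simp add: algebra_simps)
  then show ?thesis using k2 by simp
qed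


lemma positive:
  assumes c: conn and z0K: "z0 \<in> K" and hom: "\<And>z. real k * F z \<le> rho * N z" and r: "rho = real k * F z0"
  shows "\<forall>i\<in>V. z0 i > 0"
proof (rule ccontr)
  assume "\<not> (\<forall>i\<in>V. z0 i > 0)"
  have nn: "\<And>i. i \<in> V \<Longrightarrow> z0 i \<ge> 0" using z0K unfolding K_iff by auto
  have out: "\<And>i. i \<notin> V \<Longrightarrow> z0 i = 0" using z0K unfolding K_iff by auto
  have N1: "N z0 = 1" using z0K unfolding K_iff by auto
  obtain b where b: "b \<in> V" "z0 b = 0" using \<open>\<not> _\<close> nn by force
  define P where "P = {i\<in>V. z0 i > 0}"
  have "P \<noteq> {}"
  proof
    assume "P = {}"
    then have "\<And>i. i \<in> V \<Longrightarrow> z0 i = 0" using nn unfolding P_def by force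
    then have "N z0 = 0" unfolding N_def using k2 by simp
    then show False using N1 by simp
  qed
  then obtain a where a: "a \<in> P" by auto
  let ?R = "{(a,b). \<exists>e\<in>E. w e > 0 \<and> a \<in> vs e \<and> b \<in> vs e}"
  have ab: "(a, b) \<in> ?R\<^sup>*" using c a b unfolding conn_def P_def by auto
  have cross: "\<exists>p q. (p, q) \<in> ?R \<and> p \<in> P \<and> q \<notin> P" if "(x, y) \<in> ?R\<^sup>*" "x \<in> P" "y \<notin> P" for x y
    using that
  proof (induction rule: rtrancl_induct)
    case base then show ?case by simp
  next
    case (step y c)
    show ?case
    proof (cases "y \<in> P")
      case True then show ?thesis using step by blast
    next
      case False then show ?thesis using step by blast
    qed
  qed
  have "b \<notin> P" using b unfolding P_def by auto
  then obtain p q where pq: "(p, q) \<in> ?R" "p \<in> P" "q \<notin> P" using cross[OF ab a] by blast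
  then obtain e where e: "e \<in> E" "w e > 0" "p \<in> vs e" "q \<in> vs e" by auto
  have qV: "q \<in> V" using vsV e by auto
  have zq: "z0 q = 0" using pq(3) qV nn unfolding P_def by force
  define A where "A = {v \<in> vs e. z0 v = 0}"
  define m where "m = card A"
  have fe: "finite (vs e)" using finvs e by auto
  have AV: "A \<subseteq> V" using vsV e unfolding A_def by auto
  have finA: "finite A" using fe unfolding A_def by auto
  have m1: "m \<ge> 1" unfolding m_def using finA e zq unfolding A_def
    by (metis (mono_tags, lifting) card_0_eq empty_iff less_one linorder_not_le mem_Collect_eq)
  have "p \<notin> A" using pq(2) unfolding A_def P_def by auto
  then have "A \<subset> vs e" using e(3) unfolding A_def by blast
  then have mk: "m < k" unfolding m_def using psubset_card_mono[OF fe] cardk[OF e(1)] by auto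
  define C where "C = w e * (\<Prod>v\<in>vs e - A. z0 v)"
  have Cpos: "C > 0" unfolding C_def using e(2)
  proof (intro mult_pos_pos prod_pos)
    fix v assume "v \<in> vs e - A"
    then show "z0 v > 0" using vsV[OF e(1)] nn unfolding A_def by force
  qed auto
  have rnn: "rho \<ge> 0" unfolding r using F_nonneg nn by auto
  have key: "real k * C \<le> rho * real m * t" if t: "0 < t" "t \<le> 1" for t
  proof -
    define zt where "zt v = (if v \<in> A then t else z0 v)" for v
    have mono: "\<And>v. v \<in> V \<Longrightarrow> 0 \<le> z0 v \<and> z0 v \<le> zt v"
      unfolding zt_def A_def using t nn by auto
    have "F zt - F z0 = (\<Sum>e'\<in>E. w e' * ((\<Prod>v\<in>vs e'. zt v) - (\<Prod>v\<in>vs e'. z0 v)))"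
      unfolding F_def by (simp add: sum_subtractf[symmetric] algebra_simps)
    also have "\<dots> \<ge> w e * ((\<Prod>v\<in>vs e. zt v) - (\<Prod>v\<in>vs e. z0 v))"
    proof (rule member_le_sum[OF e(1) _ finE])
      fix x assume "x \<in> E - {e}"
      then have xE: "x \<in> E" by auto
      have "(\<Prod>v\<in>vs x. z0 v) \<le> (\<Prod>v\<in>vs x. zt v)"
        using mono vsV[OF xE] by (intro prod_mono) auto
      then show "0 \<le> w x * ((\<Prod>v\<in>vs x. zt v) - (\<Prod>v\<in>vs x. z0 v))" using wpos[OF xE] by simp
    qed
    finally have F1: "F zt - F z0 \<ge> w e * ((\<Prod>v\<in>vs e. zt v) - (\<Prod>v\<in>vs e. z0 v))" .
    have "(\<Prod>v\<in>vs e. z0 v) = 0" using e(4) zq fe by (intro prod_zero) auto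
    moreover have "(\<Prod>v\<in>vs e. zt v) = (\<Prod>v\<in>vs e - A. zt v) * (\<Prod>v\<in>A. zt v)"
      using fe unfolding A_def by (intro prod.subset_diff) auto
    moreover have "(\<Prod>v\<in>vs e - A. zt v) = (\<Prod>v\<in>vs e - A. z0 v)" unfolding zt_def by (intro prod.cong) auto
    moreover have "(\<Prod>v\<in>A. zt v) = t ^ m" unfolding zt_def m_def by simp
    ultimately have F2: "F zt \<ge> F z0 + C * t ^ m" using F1 unfolding C_def by (simp add: algebra_simps)
    have "N zt = (\<Sum>v\<in>V - A. \<bar>zt v\<bar> ^ k) + (\<Sum>v\<in>A. \<bar>zt v\<bar> ^ k)"
      unfolding N_def using AV finV by (intro sum.subset_diff) auto
    also have "(\<Sum>v\<in>V - A. \<bar>zt v\<bar> ^ k) = (\<Sum>v\<in>V - A. \<bar>z0 v\<bar> ^ k)" unfolding zt_def by (intro sum.cong) auto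
    also have "(\<Sum>v\<in>A. \<bar>zt v\<bar> ^ k) = real m * t ^ k" unfolding zt_def m_def using t by simp
    also have "(\<Sum>v\<in>V - A. \<bar>z0 v\<bar> ^ k) = N z0"
    proof -
      have "N z0 = (\<Sum>v\<in>V - A. \<bar>z0 v\<bar> ^ k) + (\<Sum>v\<in>A. \<bar>z0 v\<bar> ^ k)"
        unfolding N_def using AV finV by (intro sum.subset_diff) auto
      moreover have "(\<Sum>v\<in>A. \<bar>z0 v\<bar> ^ k) = 0" unfolding A_def using k2 by simp
      ultimately show ?thesis by simp
    qed
    finally have N2: "N zt = 1 + real m * t ^ k" using N1 by simp
    have "real k * (F z0 + C * t ^ m) \<le> real k * F zt" using F2 by (intro mult_left_mono) auto
    also have "\<dots> \<le> rho * (1 + real m * t ^ k)" using hom[of zt] N2 by simp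
    finally have "real k * C * t ^ m \<le> rho * real m * t ^ k" using r by (simp add: algebra_simps)
    also have "t ^ k = t ^ m * t ^ (k - m)" using mk by (simp add: power_add[symmetric])
    also have "t ^ (k - m) \<le> t"
    proof -
      have "t ^ (k - m) = t * t ^ (k - m - 1)" using mk by (metis Suc_diff_Suc diff_Suc_1 diff_diff_left power_Suc)
      also have "\<dots> \<le> t * 1" using t by (intro mult_left_mono power_le_one) auto
      finally show ?thesis by simp
    qed
    then have "rho * real m * (t ^ m * t ^ (k - m)) \<le> rho * real m * (t ^ m * t)"
      using rnn t by (intro mult_left_mono) auto
    finally have "(real k * C) * t ^ m \<le> (rho * real m * t) * t ^ m" by (simp add: algebra_simps)
    then show ?thesis using t by simp
  qed
  define t where "t = min 1 (real k * C / (2 * (rho * real m + 1)))"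
  have tpos: "t > 0" unfolding t_def using Cpos k2 rnn by (auto intro!: divide_pos_pos add_nonneg_pos mult_nonneg_nonneg)
  have "real k * C \<le> rho * real m * t" using key[OF tpos] unfolding t_def by simp
  also have "\<dots> \<le> rho * real m * (real k * C / (2 * (rho * real m + 1)))"
    unfolding t_def using rnn by (intro mult_left_mono) auto
  also have "\<dots> < real k * C"
  proof -
    have kc: "real k * C > 0" using Cpos k2 by simp
    have rm: "rho * real m \<ge> 0" using rnn by simp
    have "rho * real m < 2 * (rho * real m + 1)" using rm by (simp add: mult.commute)
    then have "rho * real m / (2 * (rho * real m + 1)) < 1" using rm by simp
    then have "(rho * real m / (2 * (rho * real m + 1))) * (real k * C) < 1 * (real k * C)"
      using kc by (intro mult_strict_right_mono) auto
    then show ?thesis by (simp add: field_simps)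
  qed
  finally show False by simp
qed

lemma exists:
  assumes c: conn and Vne: "V \<noteq> {}"
  shows "\<exists>y. eig rho y"
proof -
  obtain z0 where z0: "z0 \<in> K" "\<And>z. real k * F z \<le> real k * F z0 * N z" "rho = real k * F z0"
    using maximizer[OF Vne] by blast
  have hom: "\<And>z. real k * F z \<le> rho * N z" using z0 by simp
  have pos: "\<forall>i\<in>V. z0 i > 0" by (rule positive[OF c z0(1) hom z0(3)])
  have "eig rho z0" unfolding eig_def
  proof (intro conjI ballI allI impI)
    show "\<And>i. i \<in> V \<Longrightarrow> 0 < z0 i" using pos by auto
    show "\<And>i. i \<notin> V \<Longrightarrow> z0 i = 0" using z0(1) unfolding K_iff by auto
    have "N z0 = 1" using z0(1) unfolding K_iff by auto
    moreover have "(\<Sum>i\<in>V. z0 i ^ k) = N z0" unfolding N_def by (intro sum.cong) (use pos in auto)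
    ultimately show "(\<Sum>i\<in>V. z0 i ^ k) = 1" by simp
    show "\<And>i. i \<in> V \<Longrightarrow> rho * z0 i ^ (k - 1) = G i z0"
      using eigeq[OF z0(1) hom z0(3)] pos by auto
  qed
  then show ?thesis by blast
qed

lemma the_eig:
  assumes c: conn and Vne: "V \<noteq> {}"
  shows "eig rho (THE y. eig rho y)"
  using exists[OF c Vne] unique[OF c] by (metis theI)

end


lemma hyper_wf: assumes "kuniform n k E" "k \<ge> 2" shows "wf {1..n} E (\<lambda>e. e) (\<lambda>_. 1) k"
  using assms unfolding kuniform_def by unfold_locales auto

lemma hyper_rho: assumes "kuniform n k E" "k \<ge> 2" shows "wf.rho {1..n} E (\<lambda>e. e) (\<lambda>_. 1) k = hrho n k E"
  unfolding wf.rho_def[OF hyper_wf[OF assms]] wf.F_def[OF hyper_wf[OF assms]] wf.N_def[OF hyper_wf[OF assms]] hrho_def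
  by simp

lemma hyper_pev: assumes "kuniform n k E" "k \<ge> 2"
  shows "hpev n k E = (THE y. wf.eig {1..n} E (\<lambda>e. e) (\<lambda>_. 1) k (wf.rho {1..n} E (\<lambda>e. e) (\<lambda>_. 1) k) y)"
  unfolding hpev_def wf.eig_def[OF hyper_wf[OF assms]] wf.G_def[OF hyper_wf[OF assms]] hyper_rho[OF assms]
  by simp

lemma hyper_conn: assumes "kuniform n k E" "k \<ge> 2" "hconnected n E"
  shows "wf.conn {1..n} E (\<lambda>e. e) (\<lambda>_. 1)"
  using assms(3) unfolding wf.conn_def[OF hyper_wf[OF assms(1,2)]] hconnected_def by simp

lemma hyper_main: assumes "kuniform n k E" "k \<ge> 2" "hconnected n E"
  shows "wf.eig {1..n} E (\<lambda>e. e) (\<lambda>_. 1) k (hrho n k E) (hpev n k E)"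
proof -
  interpret H: wf "{1..n}" E "\<lambda>e. e" "\<lambda>_. 1" k by (rule hyper_wf[OF assms(1,2)])
  have "n \<ge> 1" using assms(3) unfolding hconnected_def by auto
  then show ?thesis using H.the_eig[OF hyper_conn[OF assms]] hyper_pev[OF assms(1,2)] hyper_rho[OF assms(1,2)]
    by simp
qed

definition E2 :: "nat \<Rightarrow> (nat \<times> nat) set" where "E2 n = {(i,j). i \<in> {1..n} \<and> j \<in> {1..n} \<and> i \<noteq> j}"
definition vs2 :: "nat \<times> nat \<Rightarrow> nat set" where "vs2 p = {fst p, snd p}"
definition w2 :: "nat set set \<Rightarrow> nat \<times> nat \<Rightarrow> real" where "w2 E p = mu E (fst p) (snd p) / 2"

lemma mu_sym: "mu E i j = mu E j i" unfolding mu_def by (auto intro!: arg_cong[where f=card])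
lemma mu_nn: "mu E i j \<ge> 0" unfolding mu_def by auto

lemma finE2: "finite (E2 n)"
  by (rule finite_subset[of _ "{1..n}\<times>{1..n}"]) (auto simp: E2_def)

lemma sh_wf: "wf {1..n} (E2 n) vs2 (w2 E) 2"
proof (unfold_locales)
  show "finite (E2 n)" by (rule finE2)
  show "finite {1..n}" by simp
  show "\<And>e. e \<in> E2 n \<Longrightarrow> vs2 e \<subseteq> {1..n}" by (auto simp: E2_def vs2_def)
  show "\<And>e. e \<in> E2 n \<Longrightarrow> card (vs2 e) = 2" by (auto simp: E2_def vs2_def)
  show "\<And>e. e \<in> E2 n \<Longrightarrow> w2 E e \<ge> 0" by (simp add: w2_def mu_nn)
qed simp

lemma sh_F: "2 * wf.F (E2 n) vs2 (w2 E) x = (\<Sum>i\<in>{1..n}. \<Sum>j\<in>{1..n}. mu E i j * x i * x j)"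
proof -
  have "2 * wf.F (E2 n) vs2 (w2 E) x = (\<Sum>p\<in>E2 n. mu E (fst p) (snd p) * x (fst p) * x (snd p))"
    unfolding wf.F_def[OF sh_wf] sum_distrib_left
    by (intro sum.cong refl) (auto simp: E2_def vs2_def w2_def)
  also have "\<dots> = (\<Sum>p\<in>{1..n}\<times>{1..n}. mu E (fst p) (snd p) * x (fst p) * x (snd p))"
    by (intro sum.mono_neutral_left) (auto simp: E2_def mu_def)
  also have "\<dots> = (\<Sum>i\<in>{1..n}. \<Sum>j\<in>{1..n}. mu E i j * x i * x j)"
    by (simp add: sum.cartesian_product case_prod_beta)
  finally show ?thesis .
qed

lemma sh_rho: "wf.rho {1..n} (E2 n) vs2 (w2 E) 2 = shadow_lambda n E"
  unfolding wf.rho_def[OF sh_wf] wf.N_def[OF sh_wf] shadow_lambda_def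
  by (simp add: sh_F)

lemma sh_G: assumes i: "i \<in> {1..n}"
  shows "wf.G (E2 n) vs2 (w2 E) i x = (\<Sum>j\<in>{1..n}. mu E i j * x j)"
proof -
  let ?V = "{1..n}"
  have split: "{p \<in> E2 n. i \<in> vs2 p} = (\<lambda>j. (i,j)) ` (?V - {i}) \<union> (\<lambda>j. (j,i)) ` (?V - {i})"
    using i by (auto simp: E2_def vs2_def)
  have "wf.G (E2 n) vs2 (w2 E) i x = (\<Sum>p\<in>(\<lambda>j. (i,j)) ` (?V - {i}) \<union> (\<lambda>j. (j,i)) ` (?V - {i}). w2 E p * (\<Prod>v\<in>vs2 p - {i}. x v))"
    unfolding wf.G_def[OF sh_wf] split ..
  also have "\<dots> = (\<Sum>p\<in>(\<lambda>j. (i,j)) ` (?V - {i}). w2 E p * (\<Prod>v\<in>vs2 p - {i}. x v))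
      + (\<Sum>p\<in>(\<lambda>j. (j,i)) ` (?V - {i}). w2 E p * (\<Prod>v\<in>vs2 p - {i}. x v))"
    by (intro sum.union_disjoint) auto
  also have "(\<Sum>p\<in>(\<lambda>j. (i,j)) ` (?V - {i}). w2 E p * (\<Prod>v\<in>vs2 p - {i}. x v)) = (\<Sum>j\<in>?V - {i}. mu E i j / 2 * x j)"
    by (subst sum.reindex) (auto simp: inj_on_def w2_def vs2_def insert_Diff_if intro!: sum.cong)
  also have "(\<Sum>p\<in>(\<lambda>j. (j,i)) ` (?V - {i}). w2 E p * (\<Prod>v\<in>vs2 p - {i}. x v)) = (\<Sum>j\<in>?V - {i}. mu E i j / 2 * x j)"
    by (subst sum.reindex) (auto simp: inj_on_def w2_def vs2_def insert_Diff_if mu_sym intro!: sum.cong)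
  also have "(\<Sum>j\<in>?V - {i}. mu E i j / 2 * x j) + (\<Sum>j\<in>?V - {i}. mu E i j / 2 * x j) = (\<Sum>j\<in>?V - {i}. mu E i j * x j)"
    unfolding sum.distrib[symmetric] by (intro sum.cong) auto
  also have "\<dots> = (\<Sum>j\<in>?V. mu E i j * x j)"
    using i by (intro sum.mono_neutral_left) (auto simp: mu_def)
  finally show ?thesis .
qed

lemma sh_pev:
  shows "spev n E = (THE y. wf.eig {1..n} (E2 n) vs2 (w2 E) 2 (wf.rho {1..n} (E2 n) vs2 (w2 E) 2) y)"
proof -
  have "(\<forall>i\<in>{1..n}. (\<Sum>j\<in>{1..n}. mu E i j * y j) = shadow_lambda n E * y i) \<longleftrightarrow>
        (\<forall>i\<in>{1..n}. shadow_lambda n E * y i ^ (2 - 1) = wf.G (E2 n) vs2 (w2 E) i y)" for y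
    using sh_G[of _ n E y] by force
  then show ?thesis unfolding spev_def wf.eig_def[OF sh_wf] sh_rho by presburger
qed

lemma sh_conn: assumes "hconnected n E" "kuniform n k E"
  shows "wf.conn {1..n} (E2 n) vs2 (w2 E)"
  unfolding wf.conn_def[OF sh_wf]
proof (intro ballI)
  let ?R = "{(a, b). \<exists>e\<in>E. a \<in> e \<and> b \<in> e}"
  let ?S = "{(a, b). \<exists>e\<in>E2 n. 0 < w2 E e \<and> a \<in> vs2 e \<and> b \<in> vs2 e}"
  fix u v assume u: "u \<in> {1..n}" and v: "v \<in> {1..n}"
  have "?R \<subseteq> ?S\<^sup>*"
  proof
    fix p assume p: "p \<in> ?R"
    obtain a b where ab: "p = (a,b)" by force
    show "p \<in> ?S\<^sup>*"
    proof (cases "a = b")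
      case True then show ?thesis unfolding ab by (simp only: rtrancl.rtrancl_refl)
    next
      case False
      obtain e where e: "e \<in> E" "a \<in> e" "b \<in> e" using p ab by auto
      have "finite E" using assms(2) unfolding kuniform_def by auto
      have "e \<subseteq> {1..n}" using e(1) assms(2) unfolding kuniform_def by auto
      then have abV: "a \<in> {1..n}" "b \<in> {1..n}" using e by auto
      have fin: "finite {x\<in>E. a \<in> x \<and> b \<in> x}" using \<open>finite E\<close> by simp
      have ne: "{x\<in>E. a \<in> x \<and> b \<in> x} \<noteq> {}" using e(1) e(2) e(3) by auto
      have "card {e\<in>E. a \<in> e \<and> b \<in> e} > 0" using fin ne by (simp add: card_gt_0_iff)
      then have "w2 E (a,b) > 0" using False by (simp add: w2_def mu_def)
      then have "(a,b) \<in> ?S" using abV False by (auto simp: E2_def vs2_def intro!: bexI[of _ "(a,b)"])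
      then show ?thesis unfolding ab by (rule r_into_rtrancl)
    qed
  qed
  then have "?R\<^sup>* \<subseteq> ?S\<^sup>*" by (rule rtrancl_subset_rtrancl)
  moreover have "(u, v) \<in> ?R\<^sup>*" using assms(1) u v unfolding hconnected_def by blast
  ultimately show "(u, v) \<in> ?S\<^sup>*" by (rule subsetD)
qed



definition blk :: "nat \<Rightarrow> nat \<Rightarrow> nat set" where
  "blk k j = {2 + (j - 1) * (k - 1) .. 1 + j * (k - 1)}"

lemma star_edges_blk: "star_edges eta k = (\<lambda>j. insert 1 (blk k j)) ` {1..eta}"
  unfolding star_edges_def blk_def ..

definition sfun :: "nat \<Rightarrow> nat \<Rightarrow> real" where
  "sfun k eta = sqrt ((real k - 2)^2 + 4 * (real eta * (real k - 1)))"

lemma sh_main: assumes "kuniform n k E" "hconnected n E"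
  shows "wf.eig {1..n} (E2 n) vs2 (w2 E) 2 (shadow_lambda n E) (spev n E)"
proof -
  interpret S: wf "{1..n}" "E2 n" vs2 "w2 E" 2 by (rule sh_wf)
  have "n \<ge> 1" using assms(2) unfolding hconnected_def by auto
  then show ?thesis using S.the_eig[OF sh_conn[OF assms(2,1)]] sh_pev[of n E] sh_rho[of n E] by simp
qed

locale stars =
  fixes k eta :: nat
  assumes k3: "k \<ge> 3" and eta1: "eta \<ge> 1"
begin

abbreviation "q \<equiv> k - 1"
abbreviation "n \<equiv> star_n eta k"
abbreviation "EE \<equiv> star_edges eta k"
abbreviation "ed j \<equiv> insert 1 (blk k j)"

lemma n_eq: "n = 1 + eta * q" unfolding star_n_def ..

lemma q2: "q \<ge> 2" using k3 by simp

lemma card_blk: "j \<ge> 1 \<Longrightarrow> card (blk k j) = q"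
proof -
  assume j: "j \<ge> 1"
  have "j * q = (j - 1) * q + q" using j by (metis Suc_diff_1 less_le_trans less_numeral_extra(1) mult_Suc add.commute)
  then show ?thesis unfolding blk_def by simp
qed

lemma one_notin: "1 \<notin> blk k j" unfolding blk_def by auto

lemma blk_sub: "j \<in> {1..eta} \<Longrightarrow> blk k j \<subseteq> {2..n}"
proof -
  assume j: "j \<in> {1..eta}"
  have "j * q \<le> eta * q" using j by simp
  then show ?thesis unfolding blk_def n_eq by auto
qed

lemma blk_disj: assumes "j \<ge> 1" "j' \<ge> 1" "j < j'" shows "blk k j \<inter> blk k j' = {}"
proof -
  have "j \<le> j' - 1" using assms by linarith
  then have h: "j * q \<le> (j' - 1) * q" by (rule mult_le_mono1)
  show ?thesis
  proof (rule ccontr)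
    assume "blk k j \<inter> blk k j' \<noteq> {}"
    then obtain x where "x \<in> blk k j" "x \<in> blk k j'" by blast
    then have "x \<le> 1 + j * q" "2 + (j' - 1) * q \<le> x" unfolding blk_def by auto
    with h show False by linarith
  qed
qed

lemma blk_disj': assumes "j \<ge> 1" "j' \<ge> 1" "j \<noteq> j'" shows "blk k j \<inter> blk k j' = {}"
proof (cases "j < j'")
  case True show ?thesis using blk_disj[OF assms(1,2) True] .
next
  case False then have "j' < j" using assms(3) by simp
  then show ?thesis using blk_disj[OF assms(2,1)] by (simp add: Int_commute)
qed

lemma blk_ne: "j \<ge> 1 \<Longrightarrow> blk k j \<noteq> {}"
  using card_blk q2 by fastforce

lemma leaf_in: assumes v: "v \<in> {2..n}" shows "\<exists>j\<in>{1..eta}. v \<in> blk k j"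
proof -
  define d where "d = (v - 2) div q"
  have qp: "q > 0" using q2 by simp
  have 1: "d * q \<le> v - 2" unfolding d_def by simp
  have 2: "v - 2 < q + d * q" unfolding d_def using qp by (rule dividend_less_div_times)
  have "v - 2 < eta * q" using v n_eq by auto
  then have "d < eta" unfolding d_def using qp by (simp add: div_less_iff_less_mult)
  moreover have "v \<in> blk k (d + 1)" unfolding blk_def using 1 2 v by auto
  ultimately show ?thesis by (intro bexI[of _ "d+1"]) auto
qed

lemma ed_card: "j \<ge> 1 \<Longrightarrow> card (ed j) = k"
proof -
  assume j: "j \<ge> 1"
  have "finite (blk k j)" unfolding blk_def by simp
  then show ?thesis using card_blk[OF j] one_notin k3 by simp
qed

lemma ed_inj: "inj_on ed {1..eta}"
proof (rule inj_onI)
  fix j j' assume j: "j \<in> {1..eta}" and j': "j' \<in> {1..eta}" and eq: "ed j = ed j'"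
  have "blk k j = ed j - {1}" using one_notin[of j] by auto
  also have "\<dots> = ed j' - {1}" using eq by simp
  also have "\<dots> = blk k j'" using one_notin[of j'] by auto
  finally have b: "blk k j = blk k j'" .
  show "j = j'"
  proof (rule ccontr)
    assume "j \<noteq> j'"
    then have "blk k j \<inter> blk k j' = {}" using blk_disj' j j' by auto
    then show False using b blk_ne[of j] j by auto
  qed
qed

lemma ed_sub: "j \<in> {1..eta} \<Longrightarrow> ed j \<subseteq> {1..n}"
  using blk_sub[of j] n_eq by auto

lemma kunif: "kuniform n k EE"
  unfolding kuniform_def star_edges_blk using ed_card ed_sub by auto

lemma leaf_edges: assumes j0: "j0 \<in> {1..eta}" and v: "v \<in> blk k j0"
  shows "{e \<in> EE. v \<in> e} = {ed j0}"
proof -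
  have "v \<noteq> 1" using v one_notin by auto
  have "j = j0" if "j \<in> {1..eta}" "v \<in> blk k j" for j
    using blk_disj'[of j j0] that j0 v by auto
  note jj = this
  show ?thesis
  proof (rule set_eqI, rule iffI)
    fix x assume "x \<in> {e \<in> EE. v \<in> e}"
    then obtain j where j: "j \<in> {1..eta}" "x = ed j" "v \<in> x" unfolding star_edges_blk by blast
    then have "v \<in> blk k j" using \<open>v \<noteq> 1\<close> by blast
    then have "j = j0" using jj j(1) by blast
    then show "x \<in> {ed j0}" using j by blast
  next
    fix x assume "x \<in> {ed j0}"
    then have "x = ed j0" by blast
    moreover have "ed j0 \<in> EE" unfolding star_edges_blk using j0 by blast
    ultimately show "x \<in> {e \<in> EE. v \<in> e}" using v by blast
  qed
qed

lemma hconn: "hconnected n EE"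
  unfolding hconnected_def
proof (intro conjI ballI)
  show "1 \<le> n" using n_eq by simp
  let ?R = "{(a, b). \<exists>e\<in>EE. a \<in> e \<and> b \<in> e}"
  have to1: "(u, 1) \<in> ?R\<^sup>*" and from1: "(1, u) \<in> ?R\<^sup>*" if u: "u \<in> {1..n}" for u
  proof -
    have "(u, 1) \<in> ?R \<and> (1, u) \<in> ?R"
    proof (cases "u = 1")
      case True
      have "ed 1 \<in> EE" unfolding star_edges_blk using eta1 by auto
      then show ?thesis using True by blast
    next
      case False
      then have "u \<in> {2..n}" using u by auto
      then obtain j where j: "j \<in> {1..eta}" "u \<in> blk k j" using leaf_in by blast
      then have "ed j \<in> EE" unfolding star_edges_blk by auto
      then show ?thesis using j by blast
    qed
    then show "(u, 1) \<in> ?R\<^sup>*" "(1, u) \<in> ?R\<^sup>*" by (meson r_into_rtrancl)+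
  qed
  fix u v assume "u \<in> {1..n}" "v \<in> {1..n}"
  then show "(u, v) \<in> ?R\<^sup>*" using to1 from1 by (meson rtrancl_trans)
qed


definition "ha = root k (1 / real k)"
definition "hb = root k (1 / (real k * real eta))"
definition "hlam = root k (real eta)"
definition "ystar v = (if v = 1 then ha else if v \<in> {2..n} then hb else 0)"

lemma k_pos: "k > 0" using k3 by simp
lemma ha_pos: "ha > 0" unfolding ha_def using k3 by simp
lemma hb_pos: "hb > 0" unfolding hb_def using k3 eta1 by simp
lemma hlam_pos: "hlam > 0" unfolding hlam_def using k3 eta1 by simp
lemma ha_pow: "ha ^ k = 1 / real k" unfolding ha_def using k_pos by (simp add: real_root_pow_pos2)
lemma hb_pow: "hb ^ k = 1 / (real k * real eta)" unfolding hb_def using k_pos by (simp add: real_root_pow_pos2)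
lemma hlam_pow: "hlam ^ k = real eta" unfolding hlam_def using k_pos by (simp add: real_root_pow_pos2)
lemma hlam_hb: "hlam * hb = ha"
  unfolding hlam_def hb_def ha_def using k_pos eta1 by (simp add: real_root_mult[symmetric])

lemma pow_split: "(x::real) ^ k = x * x ^ q" using k3 by (metis Suc_diff_1 k_pos power_Suc)

lemma card_leaves: "card {2..n} = eta * q" using n_eq by simp

lemma ystar_eig: "wf.eig {1..n} EE (\<lambda>e. e) (\<lambda>_. 1) k hlam ystar"
proof -
  interpret H: wf "{1..n}" EE "\<lambda>e. e" "\<lambda>_. 1" k by (rule hyper_wf[OF kunif]) (use k3 in simp)
  show ?thesis unfolding H.eig_def
  proof (intro conjI ballI allI impI)
    fix i assume i: "i \<in> {1..n}"
    show "ystar i > 0" using i ha_pos hb_pos unfolding ystar_def by auto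
  next
    fix i assume "i \<notin> {1..n}" then show "ystar i = 0" using n_eq unfolding ystar_def by auto
  next
    have ins: "{1..n} = insert 1 {2..n}" using n_eq by auto
    have "(\<Sum>i\<in>{1..n}. ystar i ^ k) = ha ^ k + (\<Sum>i\<in>{2..n}. hb ^ k)"
      unfolding ins by (subst sum.insert) (auto simp: ystar_def intro!: sum.cong)
    also have "\<dots> = 1 / real k + real (eta * q) * (1 / (real k * real eta))"
      using ha_pow hb_pow card_leaves by simp
    also have "\<dots> = 1"
    proof -
      have "real (eta * q) = real eta * (real k - 1)" using k3 by (simp add: of_nat_diff)
      then show ?thesis using eta1 k3 by (simp add: field_simps)
    qed
    finally show "(\<Sum>i\<in>{1..n}. ystar i ^ k) = 1" .
  next
    fix i assume i: "i \<in> {1..n}"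
    show "hlam * ystar i ^ (k - 1) = H.G i ystar"
    proof (cases "i = 1")
      case True
      have all1: "{e\<in>EE. 1 \<in> e} = EE" unfolding star_edges_blk by blast
      have "H.G 1 ystar = (\<Sum>e\<in>EE. (\<Prod>v\<in>e - {1}. ystar v))"
        unfolding H.G_def all1 by simp
      also have "\<dots> = (\<Sum>j\<in>{1..eta}. (\<Prod>v\<in>ed j - {1}. ystar v))"
        unfolding star_edges_blk by (rule sum.reindex[OF ed_inj, unfolded comp_def])
      also have "\<dots> = (\<Sum>j\<in>{1..eta}. hb ^ q)"
      proof (intro sum.cong refl)
        fix j assume j: "j \<in> {1..eta}"
        have "ed j - {1} = blk k j" using one_notin[of j] by auto
        moreover have "(\<Prod>v\<in>blk k j. ystar v) = (\<Prod>v\<in>blk k j. hb)"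
          using blk_sub[OF j] one_notin[of j] unfolding ystar_def by (intro prod.cong) auto
        ultimately show "(\<Prod>v\<in>ed j - {1}. ystar v) = hb ^ q" using card_blk[of j] j by simp
      qed
      also have "\<dots> = real eta * hb ^ q" by simp
      also have "\<dots> = hlam ^ k * hb ^ q" using hlam_pow by simp
      also have "\<dots> = hlam * ha ^ q" using hlam_hb[symmetric] pow_split[of hlam] by (simp add: power_mult_distrib)
      finally show ?thesis using True unfolding ystar_def by simp
    next
      case False
      then have iL: "i \<in> {2..n}" using i by auto
      obtain j0 where j0: "j0 \<in> {1..eta}" "i \<in> blk k j0" using leaf_in[OF iL] by blast
      have "H.G i ystar = (\<Prod>v\<in>ed j0 - {i}. ystar v)"
        unfolding H.G_def leaf_edges[OF j0] by simp
      also have "ed j0 - {i} = insert 1 (blk k j0 - {i})" using False by auto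
      also have "(\<Prod>v\<in>insert 1 (blk k j0 - {i}). ystar v) = ha * (\<Prod>v\<in>blk k j0 - {i}. ystar v)"
      proof -
        have fin: "finite (blk k j0 - {i})" by (simp add: blk_def)
        have "1 \<notin> blk k j0 - {i}" using one_notin[of j0] by blast
        have "ystar 1 = ha" by (simp add: ystar_def)
        with prod.insert[OF fin \<open>1 \<notin> _\<close>, of ystar] show ?thesis by simp
      qed
      also have "(\<Prod>v\<in>blk k j0 - {i}. ystar v) = (\<Prod>v\<in>blk k j0 - {i}. hb)"
        using blk_sub[OF j0(1)] one_notin[of j0] unfolding ystar_def by (intro prod.cong) auto
      also have "\<dots> = hb ^ (q - 1)"
      proof -
        have "card (blk k j0 - {i}) = q - 1" using card_blk[of j0] j0 by (simp add: blk_def)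
        then show ?thesis by simp
      qed
      finally have G: "H.G i ystar = ha * hb ^ (q - 1)" .
      have "hlam * ystar i ^ (k-1) = hlam * hb ^ q" using iL False unfolding ystar_def by simp
      also have "\<dots> = (hlam * hb) * hb ^ (q - 1)"
      proof -
        have "Suc (q - 1) = q" using q2 by simp
        then have "hb ^ q = hb * hb ^ (q - 1)" by (metis power_Suc)
        then show ?thesis by simp
      qed
      also have "\<dots> = ha * hb ^ (q - 1)" using hlam_hb by simp
      finally show ?thesis using G by simp
    qed
  qed
qed

lemma hyper_result: "hpev n k EE 1 ^ k = 1 / real k"
proof -
  have k2: "k \<ge> 2" using k3 by simp
  interpret H: wf "{1..n}" EE "\<lambda>e. e" "\<lambda>_. 1" k by (rule hyper_wf[OF kunif k2])
  have r: "hrho n k EE = hlam" using H.rho_eq[OF ystar_eig] hyper_rho[OF kunif k2] by simp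
  have "H.eig (hrho n k EE) (hpev n k EE)" by (rule hyper_main[OF kunif k2 hconn])
  then have "hpev n k EE = ystar" using H.unique[OF hyper_conn[OF kunif k2 hconn]] ystar_eig r by simp
  then show ?thesis using ha_pow unfolding ystar_def by simp
qed


definition "qq = real k - 1"
definition "mm = real eta * qq"
definition "ss = sqrt ((qq - 1)^2 + 4 * mm)"
definition "rr = (ss - (qq - 1)) / 2"
definition "slam = rr + qq - 1"
definition "dd = 1 / sqrt (rr^2 + mm)"
definition "cc = rr * dd"
definition "xstar v = (if v = 1 then cc else if v \<in> {2..n} then dd else 0)"

lemma ss_sfun: "ss = sfun k eta"
proof -
  have "qq - 1 = real k - 2" unfolding qq_def by simp
  then show ?thesis unfolding ss_def sfun_def mm_def qq_def by simp
qed

lemma qq2: "qq \<ge> 2" unfolding qq_def using k3 by simp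
lemma mm_pos: "mm > 0" unfolding mm_def using qq2 eta1 by simp
lemma ss_sq: "ss ^ 2 = (qq - 1)^2 + 4 * mm" unfolding ss_def using mm_pos qq2 by simp
lemma ss_gt: "ss > qq - 1"
  unfolding ss_def using mm_pos qq2 by (intro real_less_rsqrt) simp
lemma rr_pos: "rr > 0" unfolding rr_def using ss_gt by simp
lemma slam_rr: "slam * rr = mm"
proof -
  have "slam * rr = (ss ^ 2 - (qq - 1) ^ 2) / 4" unfolding slam_def rr_def by (simp add: field_simps power2_eq_square)
  then show ?thesis using ss_sq by simp
qed
lemma two_rr: "2 * rr + qq - 1 = ss" unfolding rr_def by (simp add: field_simps)
lemma p_pos: "rr ^ 2 + mm > 0" using add_nonneg_pos[OF zero_le_power2[of rr] mm_pos] .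
lemma dd_pos: "dd > 0" unfolding dd_def using p_pos by simp
lemma dd_sq: "dd ^ 2 * (rr ^ 2 + mm) = 1"
proof -
  have p: "rr ^ 2 + mm > 0" by (rule p_pos)
  have "dd ^ 2 = 1 / (rr ^ 2 + mm)" unfolding dd_def using p by (simp add: power_divide)
  then show ?thesis using p by simp
qed
lemma cc_pos: "cc > 0" unfolding cc_def using rr_pos dd_pos by simp

lemma cc_sq: "cc ^ 2 = 1 / 2 - (real k - 2) / (2 * ss)"
proof -
  have p: "rr ^ 2 + mm > 0" by (rule p_pos)
  have d2: "dd ^ 2 = 1 / (rr ^ 2 + mm)" using dd_sq p by (simp add: field_simps)
  have "cc ^ 2 = rr ^ 2 / (rr ^ 2 + mm)" unfolding cc_def using d2
    by (simp add: power_mult_distrib)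
  also have "rr ^ 2 + mm = rr * ss"
  proof -
    have "rr * ss = rr * (2 * rr + qq - 1)" using two_rr by simp
    then show ?thesis using slam_rr unfolding slam_def by (simp add: algebra_simps power2_eq_square)
  qed
  also have "rr ^ 2 / (rr * ss) = rr / ss" using rr_pos by (simp add: power2_eq_square)
  also have "rr / ss = 1 / 2 - (real k - 2) / (2 * ss)"
    using ss_gt qq2 unfolding rr_def qq_def by (simp add: field_simps)
  finally show ?thesis .
qed


lemma edges_one: "{e \<in> EE. 1 \<in> e} = EE" unfolding star_edges_blk by blast

lemma mu1: assumes v: "v \<in> {2..n}" shows "mu EE 1 v = 1"
proof -
  obtain j0 where j0: "j0 \<in> {1..eta}" "v \<in> blk k j0" using leaf_in[OF v] by blast
  have "{e \<in> EE. 1 \<in> e \<and> v \<in> e} = {e \<in> EE. v \<in> e}" unfolding star_edges_blk by blast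
  then show ?thesis unfolding mu_def using leaf_edges[OF j0] v by simp
qed

lemma muL: assumes j0: "j0 \<in> {1..eta}" "u \<in> blk k j0" and v: "v \<in> {2..n}" "v \<noteq> u"
  shows "mu EE u v = (if v \<in> blk k j0 then 1 else 0)"
proof -
  have "{e \<in> EE. u \<in> e \<and> v \<in> e} = {e \<in> {e \<in> EE. u \<in> e}. v \<in> e}" by blast
  also have "\<dots> = {e \<in> {ed j0}. v \<in> e}" unfolding leaf_edges[OF j0] ..
  finally have eq: "{e \<in> EE. u \<in> e \<and> v \<in> e} = {e \<in> {ed j0}. v \<in> e}" .
  show ?thesis
  proof (cases "v \<in> blk k j0")
    case True
    then have "{e \<in> {ed j0}. v \<in> e} = {ed j0}" by blast
    then show ?thesis unfolding mu_def eq using True v by simp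
  next
    case False
    then have "{e \<in> {ed j0}. v \<in> e} = {}" using v by auto
    then show ?thesis unfolding mu_def eq using False v by simp
  qed
qed

lemma real_q: "real q = qq" unfolding qq_def using k3 by (simp add: of_nat_diff)
lemma real_eq: "real (eta * q) = mm" unfolding mm_def using real_q by simp

lemma xstar_eig: "wf.eig {1..n} (E2 n) vs2 (w2 EE) 2 slam xstar"
proof -
  interpret S: wf "{1..n}" "E2 n" vs2 "w2 EE" 2 by (rule sh_wf)
  have ins: "{1..n} = insert 1 {2..n}" using n_eq by auto
  have fin: "finite {2..n}" by simp
  have n1: "1 \<notin> {2..n}" by simp
  show ?thesis unfolding S.eig_def
  proof (intro conjI ballI allI impI)
    fix i assume i: "i \<in> {1..n}"
    show "xstar i > 0" using i cc_pos dd_pos unfolding xstar_def by auto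
  next
    fix i assume "i \<notin> {1..n}" then show "xstar i = 0" using n_eq unfolding xstar_def by auto
  next
    have "(\<Sum>i\<in>{1..n}. xstar i ^ 2) = cc ^ 2 + (\<Sum>i\<in>{2..n}. dd ^ 2)"
      unfolding ins sum.insert[OF fin n1] by (simp add: xstar_def)
    also have "\<dots> = dd ^ 2 * (rr ^ 2 + mm)" using card_leaves real_eq unfolding cc_def
      by (simp add: algebra_simps power_mult_distrib)
    also have "\<dots> = 1" by (rule dd_sq)
    finally show "(\<Sum>i\<in>{1..n}. xstar i ^ 2) = 1" .
  next
    fix i assume i: "i \<in> {1..n}"
    have G: "S.G i xstar = (\<Sum>j\<in>{1..n}. mu EE i j * xstar j)" by (rule sh_G[OF i])
    show "slam * xstar i ^ (2 - 1) = S.G i xstar"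
    proof (cases "i = 1")
      case True
      have "(\<Sum>j\<in>{1..n}. mu EE i j * xstar j) = mu EE 1 1 * cc + (\<Sum>j\<in>{2..n}. mu EE 1 j * xstar j)"
        unfolding ins sum.insert[OF fin n1] True by (simp add: xstar_def)
      also have "(\<Sum>j\<in>{2..n}. mu EE 1 j * xstar j) = (\<Sum>j\<in>{2..n}. dd)"
      proof (intro sum.cong refl)
        fix j assume j: "j \<in> {2..n}"
        then show "mu EE 1 j * xstar j = dd" using mu1[OF j] by (auto simp: xstar_def)
      qed
      also have "\<dots> = mm * dd" using card_leaves real_eq by simp
      also have "mu EE 1 1 = 0" by (simp add: mu_def)
      finally have "S.G i xstar = mm * dd" using G by simp
      moreover have "slam * xstar i ^ (2 - 1) = mm * dd" using True slam_rr unfolding xstar_def cc_def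
        by (simp add: mult.assoc[symmetric])
      ultimately show ?thesis by simp
    next
      case False
      then have iL: "i \<in> {2..n}" using i by auto
      obtain j0 where j0: "j0 \<in> {1..eta}" "i \<in> blk k j0" using leaf_in[OF iL] by blast
      have "(\<Sum>j\<in>{1..n}. mu EE i j * xstar j) = mu EE i 1 * cc + (\<Sum>j\<in>{2..n}. mu EE i j * xstar j)"
        unfolding ins sum.insert[OF fin n1] by (simp add: xstar_def)
      also have "mu EE i 1 = 1" using mu1[OF iL] mu_sym by metis
      also have "(\<Sum>j\<in>{2..n}. mu EE i j * xstar j) = (\<Sum>j\<in>{2..n}. if j \<in> blk k j0 - {i} then dd else 0)"
      proof (intro sum.cong refl)
        fix j assume j: "j \<in> {2..n}"
        show "mu EE i j * xstar j = (if j \<in> blk k j0 - {i} then dd else 0)"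
        proof (cases "j = i")
          case True then show ?thesis by (simp add: mu_def)
        next
          case False then show ?thesis using muL[OF j0 j False] j unfolding xstar_def by auto
        qed
      qed
      also have "\<dots> = (\<Sum>j\<in>{j \<in> {2..n}. j \<in> blk k j0 - {i}}. dd)" by (rule sum.inter_filter[OF fin, symmetric])
      also have "{j \<in> {2..n}. j \<in> blk k j0 - {i}} = blk k j0 - {i}" using blk_sub[OF j0(1)] by blast
      also have "(\<Sum>j\<in>blk k j0 - {i}. dd) = (qq - 1) * dd"
      proof -
        have "card (blk k j0 - {i}) = q - 1" using card_blk[of j0] j0 by (simp add: blk_def)
        moreover have "real (q - 1) = qq - 1" using real_q q2 by (simp add: of_nat_diff)
        ultimately show ?thesis by simp
      qed
      finally have "S.G i xstar = cc + (qq - 1) * dd" using G by simp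
      moreover have "slam * xstar i ^ (2 - 1) = cc + (qq - 1) * dd" using iL False unfolding xstar_def slam_def cc_def
        by (simp add: algebra_simps)
      ultimately show ?thesis by simp
    qed
  qed
qed

lemma shadow_result: "spev n EE 1 ^ 2 = 1 / 2 - (real k - 2) / (2 * ss)"
proof -
  interpret S: wf "{1..n}" "E2 n" vs2 "w2 EE" 2 by (rule sh_wf)
  have r: "shadow_lambda n EE = slam" using S.rho_eq[OF xstar_eig] sh_rho[of n EE] by simp
  have "S.eig (shadow_lambda n EE) (spev n EE)" by (rule sh_main[OF kunif hconn])
  then have "spev n EE = xstar" using S.unique[OF sh_conn[OF hconn kunif]] xstar_eig r by simp
  then show ?thesis using cc_sq unfolding xstar_def by simp
qed


end



lemma star_hyper: "k \<ge> 3 \<Longrightarrow> eta \<ge> 1 \<Longrightarrow> hpev (star_n eta k) k (star_edges eta k) 1 ^ k = 1 / real k"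
  using stars.hyper_result[of k eta] by (simp add: stars_def)

lemma star_shadow: "k \<ge> 3 \<Longrightarrow> eta \<ge> 1 \<Longrightarrow> spev (star_n eta k) (star_edges eta k) 1 ^ 2 = 1 / 2 - (real k - 2) / (2 * sfun k eta)"
  using stars.shadow_result[of k eta] stars.ss_sfun[of k eta] by (simp add: stars_def)

lemma sfun_lim: assumes "k \<ge> 3" shows "((\<lambda>eta. (real k - 2) / (2 * sfun k eta)) \<longlonglongrightarrow> 0)"
proof (rule tendsto_divide_0[OF tendsto_const])
  have "filterlim (\<lambda>eta. sqrt (real eta)) at_top sequentially"
    by (rule filterlim_compose[OF sqrt_at_top filterlim_real_sequentially])
  moreover have "eventually (\<lambda>eta. sqrt (real eta) \<le> 2 * sfun k eta) sequentially"
  proof (rule always_eventually, rule allI)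
    fix eta
    have "1 \<le> 4 * (real k - 1)" using assms by simp
    then have "real eta * 1 \<le> real eta * (4 * (real k - 1))" by (intro mult_left_mono) auto
    moreover have "real eta * (4 * (real k - 1)) = 4 * (real eta * (real k - 1))" by (simp add: algebra_simps)
    ultimately have A: "real eta \<le> 4 * (real eta * (real k - 1))" by (simp only: mult_1_right)
    have B: "real eta \<le> (real k - 2)^2 + 4 * (real eta * (real k - 1))"
      using A zero_le_power2[of "real k - 2"] by linarith
    then have "sqrt (real eta) \<le> sfun k eta" unfolding sfun_def by simp
    moreover have "sfun k eta \<ge> 0" unfolding sfun_def using B by simp
    ultimately show "sqrt (real eta) \<le> 2 * sfun k eta" by simp
  qed
  ultimately have "filterlim (\<lambda>eta. 2 * sfun k eta) at_top sequentially" by (rule filterlim_at_top_mono)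
  then show "filterlim (\<lambda>eta. 2 * sfun k eta) at_infinity sequentially" by (rule filterlim_at_top_imp_at_infinity)
qed

lemma bounded_val: assumes "kuniform n k E" "hconnected n E" "k \<ge> 2"
  shows "Max ((\<lambda>v. \<bar>hpev n k E v ^ k - spev n E v ^ 2\<bar>) ` {1..n}) \<le> 1"
proof -
  have n1: "n \<ge> 1" using assms(2) unfolding hconnected_def by auto
  have H: "wf.eig {1..n} E (\<lambda>e. e) (\<lambda>_. 1) k (hrho n k E) (hpev n k E)" by (rule hyper_main[OF assms(1,3,2)])
  have S: "wf.eig {1..n} (E2 n) vs2 (w2 E) 2 (shadow_lambda n E) (spev n E)" by (rule sh_main[OF assms(1,2)])
  have "\<bar>hpev n k E v ^ k - spev n E v ^ 2\<bar> \<le> 1" if v: "v \<in> {1..n}" for v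
  proof -
    have h0: "hpev n k E v > 0" and hs: "(\<Sum>i\<in>{1..n}. hpev n k E i ^ k) = 1"
      using H v unfolding wf.eig_def[OF hyper_wf[OF assms(1,3)]] by auto
    have s0: "spev n E v > 0" and ss: "(\<Sum>i\<in>{1..n}. spev n E i ^ 2) = 1"
      using S v unfolding wf.eig_def[OF sh_wf] by auto
    have "hpev n k E v ^ k \<le> (\<Sum>i\<in>{1..n}. hpev n k E i ^ k)"
      using v h0 H unfolding wf.eig_def[OF hyper_wf[OF assms(1,3)]]
      by (intro member_le_sum) (auto intro: less_imp_le)
    moreover have "spev n E v ^ 2 \<le> (\<Sum>i\<in>{1..n}. spev n E i ^ 2)"
      using v by (intro member_le_sum) auto
    moreover have "hpev n k E v ^ k \<ge> 0" "spev n E v ^ 2 \<ge> 0" using h0 by auto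
    ultimately show ?thesis using hs ss by linarith
  qed
  then show ?thesis using n1 by (subst Max_le_iff) auto
qed

theorem mainTheorem7:
  fixes k :: nat
  assumes "k \<ge> 3"
  shows "(\<forall>eta \<ge> 1. hpev (star_n eta k) k (star_edges eta k) 1 ^ k = 1 / real k)
       \<and> (\<lambda>eta. spev (star_n eta k) (star_edges eta k) 1 ^ 2) \<longlonglongrightarrow> 1 / 2
       \<and> Delta k \<ge> 1 / 2 - 1 / real k"
proof (intro conjI allI impI)
  show "\<And>eta. 1 \<le> eta \<Longrightarrow> hpev (star_n eta k) k (star_edges eta k) 1 ^ k = 1 / real k"
    using star_hyper assms by blast
  define g where "g eta = 1 / 2 - (real k - 2) / (2 * sfun k eta)" for eta
  have glim: "g \<longlonglongrightarrow> 1 / 2" unfolding g_def using tendsto_diff[OF tendsto_const sfun_lim[OF assms]] by simp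
  have geq: "\<And>eta. eta \<ge> 1 \<Longrightarrow> spev (star_n eta k) (star_edges eta k) 1 ^ 2 = g eta"
    unfolding g_def using star_shadow assms by blast
  show "(\<lambda>eta. spev (star_n eta k) (star_edges eta k) 1 ^ 2) \<longlonglongrightarrow> 1 / 2"
  proof (rule Lim_transform_eventually[OF glim])
    show "\<forall>\<^sub>F x in sequentially. g x = spev (star_n x k) (star_edges x k) 1 ^ 2"
      by (rule eventually_mono[OF eventually_ge_at_top[of 1]]) (metis geq)
  qed
  define X where "X = ((\<lambda>(n, E). Max ((\<lambda>v. \<bar>hpev n k E v ^ k - spev n E v ^ 2\<bar>) ` {1..n}))
                   ` {(n, E). kuniform n k E \<and> hconnected n E})"
  have bdd: "bdd_above X" unfolding X_def bdd_above_def using bounded_val assms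
    by (intro exI[of _ 1]) auto
  have low: "\<bar>1 / real k - g eta\<bar> \<le> Delta k" if eta: "eta \<ge> 1" for eta
  proof -
    interpret st: stars k eta using assms eta by unfold_locales
    let ?n = "star_n eta k" and ?E = "star_edges eta k"
    have mem: "Max ((\<lambda>v. \<bar>hpev ?n k ?E v ^ k - spev ?n ?E v ^ 2\<bar>) ` {1..?n}) \<in> X"
      unfolding X_def using st.kunif st.hconn by force
    have "\<bar>1 / real k - g eta\<bar> = \<bar>hpev ?n k ?E 1 ^ k - spev ?n ?E 1 ^ 2\<bar>"
      using star_hyper[OF assms eta] geq[OF eta] by simp
    also have "\<dots> \<le> Max ((\<lambda>v. \<bar>hpev ?n k ?E v ^ k - spev ?n ?E v ^ 2\<bar>) ` {1..?n})"
      using st.n_eq by (intro Max_ge) auto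
    also have "\<dots> \<le> Sup X" using mem bdd by (rule cSup_upper)
    finally show ?thesis unfolding Delta_def X_def .
  qed
  have "(\<lambda>eta. \<bar>1 / real k - g eta\<bar>) \<longlonglongrightarrow> \<bar>1 / real k - 1 / 2\<bar>"
    by (intro tendsto_intros glim)
  then have "\<bar>1 / real k - 1 / 2\<bar> \<le> Delta k"
    by (rule LIMSEQ_le_const2) (use low in blast)
  moreover have "\<bar>1 / real k - 1 / 2\<bar> = 1 / 2 - 1 / real k" using assms by (simp add: field_simps)
  ultimately show "Delta k \<ge> 1 / 2 - 1 / real k" by simp
qed

end
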